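(* Let $\mathcal{V}_R:\mathcal{B}(\mathcal{H}_R)\to\mathcal{B}(\mathcal{H}_{R'})$ and $\mathcal{W}_A:\mathcal{B}(\mathcal{H}_A)\to\mathcal{B}(\mathcal{H}_{A'})$ be local isometric channels, $\mathcal{V}_R(X)=V X V^\dagger$, $\mathcal{W}_A(Y)=WYW^\dagger$ with $V,W$ isometries, that jointly commute with the $G$-twirl, i.e. $(\mathcal{V}_R\otimes\mathcal{W}_A)\circ\mathcal{G}_{RA}=\mathcal{G}_{R'A'}\circ(\mathcal{V}_R\otimes\mathcal{W}_A)$. Then $H_{\mathcal{V}(\eta)}(\mathcal{W}(\rho))=H_\eta(\rho)$ for every pair of quantum states $\eta$ on $\mathcal{H}_R$ and $\rho$ on $\mathcal{H}_A$.
   Context: $G$ is a compact group with normalized Haar measure $dg$. Each finite-dimensional quantum system $X$ (here $R,A,R',A'$) carries a continuous unitary representation $U_X(g)$ on $\mathcal{H}_X$; bipartite systems carry the tensor product representation. The $G$-twirl on a system $X$ is $\mathcal{G}(M)=\int dg\, U_X(g) M U_X(g)^\dagger$; in particular $\mathcal{G}_{RA}(M)=\int dg\,(U_R(g)\otimes U_A(g))M(U_R(g)\otimes U_A(g))^\dagger$. For a positive operator $\Omega_{RA}$, the conditional min-entropy is $H_{\min}(R|A)_\Omega=-\log_2\inf_{X_A\ge 0}\{\mathrm{tr}[X_A]:\mathbb{1}_R\otimes X_A\ge\Omega_{RA}\}$. For a state $\eta$ on $R$ and a state $\tau$ on $A$, $H_\eta(\tau):=H_{\min}(R|A)_{\mathcal{G}(\eta\otimes\tau)}$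 (and analogously for $R',A'$). *)

theory Defs
  imports "HOL-Probability.Probability" "Jordan_Normal_Form.Schur_Decomposition"
begin

(* Matrices are JNF complex matrices; a d-dimensional Hilbert space is C^d. *)

definition mtrace :: "complex mat \<Rightarrow> complex" where
  "mtrace A = (\<Sum>i<dim_row A. A $$ (i, i))"

(* Kronecker (tensor) product; the first factor is the first tensor slot. *)
definition kron :: "complex mat \<Rightarrow> complex mat \<Rightarrow> complex mat" where
  "kron A B = mat (dim_row A * dim_row B) (dim_col A * dim_col B)
     (\<lambda>(i, j). A $$ (i div dim_row B, j div dim_col B) * B $$ (i mod dim_row B, j mod dim_col B))"

definition psd :: "nat \<Rightarrow> complex mat \<Rightarrow> bool" where
  "psd n A \<longleftrightarrow> A \<in> carrier_mat n n \<and> mat_adjoint A = A \<and>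
     (\<forall>v \<in> carrier_vec n. 0 \<le> Re (mult_mat_vec A v \<bullet>c v))"

definition is_state :: "nat \<Rightarrow> complex mat \<Rightarrow> bool" where
  "is_state n \<rho> \<longleftrightarrow> psd n \<rho> \<and> mtrace \<rho> = 1"

definition isometry :: "nat \<Rightarrow> nat \<Rightarrow> complex mat \<Rightarrow> bool" where
  "isometry m n V \<longleftrightarrow> V \<in> carrier_mat m n \<and> mat_adjoint V * V = 1\<^sub>m n"

definition conj_by :: "complex mat \<Rightarrow> complex mat \<Rightarrow> complex mat" where
  "conj_by V X = V * X * mat_adjoint V"

(* compact (Hausdorff) topological group, written additively as an Isabelle group_add type,
   with normalized Haar measure mu: a Borel probability measure invariant under left translation *)
definition haar_prob :: "'g :: {topological_group_add, t2_space} measure \<Rightarrow> bool" where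
  "haar_prob mu \<longleftrightarrow> compact (UNIV :: 'g set) \<and> sets mu = sets borel \<and> prob_space mu \<and>
     (\<forall>g. \<forall>A \<in> sets borel. measure mu ((\<lambda>h. g + h) ` A) = measure mu A)"

definition unitary_rep :: "nat \<Rightarrow> ('g :: {topological_group_add, t2_space} \<Rightarrow> complex mat) \<Rightarrow> bool" where
  "unitary_rep d U \<longleftrightarrow>
     (\<forall>g. U g \<in> carrier_mat d d \<and> mat_adjoint (U g) * U g = 1\<^sub>m d) \<and>
     (\<forall>g h. U (g + h) = U g * U h) \<and> U 0 = 1\<^sub>m d \<and>
     (\<forall>i<d. \<forall>j<d. continuous_on UNIV (\<lambda>g. U g $$ (i, j)))"

definition twirl :: "'g measure \<Rightarrow> ('g \<Rightarrow> complex mat) \<Rightarrow> nat \<Rightarrow> complex mat \<Rightarrow> complex mat" where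
  "twirl mu U d M = mat d d (\<lambda>(i, j). \<integral>g. (U g * M * mat_adjoint (U g)) $$ (i, j) \<partial>mu)"

(* conditional min-entropy H_min(R|A)_\<Omega>, R of dimension dR, A of dimension dA *)
definition Hmin :: "nat \<Rightarrow> nat \<Rightarrow> complex mat \<Rightarrow> real" where
  "Hmin dR dA \<Omega> = - log 2 (Inf {Re (mtrace X) | X. psd dA X \<and> psd (dR * dA) (kron (1\<^sub>m dR) X - \<Omega>)})"

(* H_\<eta>(\<tau>) := H_min(R|A) of G_RA(\<eta> \<otimes> \<tau>) *)
definition Hq :: "'g measure \<Rightarrow> ('g \<Rightarrow> complex mat) \<Rightarrow> ('g \<Rightarrow> complex mat) \<Rightarrow> nat \<Rightarrow> nat
    \<Rightarrow> complex mat \<Rightarrow> complex mat \<Rightarrow> real" where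
  "Hq mu UR UA dR dA \<eta> \<tau> = Hmin dR dA (twirl mu (\<lambda>g. kron (UR g) (UA g)) (dR * dA) (kron \<eta> \<tau>))"

end

theory Submission
  imports Defs
begin

lemma adj_dim[simp]: "dim_row (mat_adjoint A) = dim_col A" "dim_col (mat_adjoint A) = dim_row A"
  unfolding mat_adjoint_def by auto

lemma adj_index[simp]: fixes A :: "complex mat"
  shows "i < dim_col A \<Longrightarrow> j < dim_row A \<Longrightarrow> mat_adjoint A $$ (i,j) = cnj (A $$ (j,i))"
  unfolding mat_adjoint_def by (simp add: mat_of_rows_index)

lemma adj_carrier[simp]: "A \<in> carrier_mat m n \<Longrightarrow> mat_adjoint A \<in> carrier_mat n m"
  by auto

lemma adj_adj[simp]: fixes A :: "complex mat" shows "mat_adjoint (mat_adjoint A) = A"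
  by (rule eq_matI) auto

lemma adj_mult: fixes A B :: "complex mat" shows "A \<in> carrier_mat m n \<Longrightarrow> B \<in> carrier_mat n p \<Longrightarrow>
   mat_adjoint (A * B) = mat_adjoint B * mat_adjoint A"
proof (rule eq_matI)
  fix i j assume A: "A \<in> carrier_mat m n" and B: "B \<in> carrier_mat n p"
  assume ij: "i < dim_row (mat_adjoint B * mat_adjoint A)" "j < dim_col (mat_adjoint B * mat_adjoint A)"
  then have i: "i < p" and j: "j < m" using A B by auto
  have "mat_adjoint (A * B) $$ (i, j) = cnj (\<Sum>k<n. A $$ (j,k) * B $$ (k,i))"
    using A B i j by (simp add: scalar_prod_def lessThan_atLeast0)
  also have "\<dots> = (\<Sum>k<n. mat_adjoint B $$ (i,k) * mat_adjoint A $$ (k,j))"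
    using A B i j by (simp add: mult.commute)
  also have "\<dots> = (mat_adjoint B * mat_adjoint A) $$ (i, j)"
    using A B i j by (simp add: scalar_prod_def lessThan_atLeast0)
  finally show "mat_adjoint (A * B) $$ (i, j) = (mat_adjoint B * mat_adjoint A) $$ (i, j)" .
qed auto

lemma adj_one[simp]: "mat_adjoint (1\<^sub>m n :: complex mat) = 1\<^sub>m n"
  by (rule eq_matI) auto

lemma adj_minus: fixes A B :: "complex mat" shows "A \<in> carrier_mat m n \<Longrightarrow> B \<in> carrier_mat m n \<Longrightarrow>
   mat_adjoint (A - B) = mat_adjoint A - mat_adjoint B"
  by (rule eq_matI) auto

lemma adj_plus: fixes A B :: "complex mat" shows "A \<in> carrier_mat m n \<Longrightarrow> B \<in> carrier_mat m n \<Longrightarrow>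
   mat_adjoint (A + B) = mat_adjoint A + mat_adjoint B"
  by (rule eq_matI) auto

lemma sum_split_prod: "(\<Sum>k<b*d. f k) = (\<Sum>k1<b. \<Sum>k2<d. f (k1*d+k2::nat))"
proof (induction b)
  case 0 then show ?case by simp
next
  case (Suc b)
  have e: "{..<Suc b * d} = {..<b*d} \<union> {b*d..<b*d+d}" by auto
  have "(\<Sum>k<Suc b*d. f k) = (\<Sum>k<b*d. f k) + (\<Sum>k\<in>{b*d..<b*d+d}. f k)"
    unfolding e by (rule sum.union_disjoint) auto
  also have "(\<Sum>k\<in>{b*d..<b*d+d}. f k) = (\<Sum>k2<d. f (b*d+k2))"
    by (rule sum.reindex_bij_witness[of _ "\<lambda>k2. b*d+k2" "\<lambda>k. k - b*d"]) auto
  finally show ?case using Suc by (simp add: add.commute)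
qed

lemma kron_dim[simp]: "dim_row (kron A B) = dim_row A * dim_row B" "dim_col (kron A B) = dim_col A * dim_col B"
  unfolding kron_def by auto

lemma kron_carrier[simp]: "A \<in> carrier_mat a b \<Longrightarrow> B \<in> carrier_mat c d \<Longrightarrow> kron A B \<in> carrier_mat (a*c) (b*d)"
  by auto

lemma kron_index: "i < dim_row A * dim_row B \<Longrightarrow> j < dim_col A * dim_col B \<Longrightarrow>
  kron A B $$ (i,j) = A $$ (i div dim_row B, j div dim_col B) * B $$ (i mod dim_row B, j mod dim_col B)"
  unfolding kron_def by auto

lemma div_lt: "i < a * c \<Longrightarrow> i div c < (a::nat)"
  by (simp add: less_mult_imp_div_less)
lemma mod_lt: "i < a * c \<Longrightarrow> i mod c < (c::nat)"
  by (metis mod_less_divisor mult_0_right nat_neq_iff not_less_zero zero_less_iff_neq_zero)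

lemma kron_mult:
  assumes A: "A \<in> carrier_mat a b" and B: "B \<in> carrier_mat c d"
    and C: "C \<in> carrier_mat b e" and D: "D \<in> carrier_mat d f"
  shows "kron A B * kron C D = kron (A * C) (B * D)"
proof (rule eq_matI)
  fix i j assume "i < dim_row (kron (A * C) (B * D))" "j < dim_col (kron (A * C) (B * D))"
  then have i: "i < a * c" and j: "j < e * f" using A B C D by auto
  have i1: "i div c < a" and i2: "i mod c < c" using div_lt[OF i] mod_lt[OF i] by auto
  have j1: "j div f < e" and j2: "j mod f < f" using div_lt[OF j] mod_lt[OF j] by auto
  have "(kron A B * kron C D) $$ (i, j) = (\<Sum>k<b*d. kron A B $$ (i,k) * kron C D $$ (k,j))"
    using A B C D i j by (simp add: scalar_prod_def lessThan_atLeast0)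
  also have "\<dots> = (\<Sum>k1<b. \<Sum>k2<d. kron A B $$ (i,k1*d+k2) * kron C D $$ (k1*d+k2,j))"
    by (rule sum_split_prod)
  also have "\<dots> = (\<Sum>k1<b. \<Sum>k2<d. (A $$ (i div c, k1) * C $$ (k1, j div f)) * (B $$ (i mod c, k2) * D $$ (k2, j mod f)))"
  proof (intro sum.cong refl)
    fix k1 k2 assume k1: "k1 \<in> {..<b}" and k2: "k2 \<in> {..<d}"
    have "k1*d+k2 < Suc k1 * d" using k2 by simp
    also have "Suc k1 * d \<le> b * d" using k1 by (intro mult_le_mono1) simp
    finally have lt: "k1*d+k2 < b*d" .
    have dv: "(k1*d+k2) div d = k1" "(k1*d+k2) mod d = k2" using k2 by auto
    show "kron A B $$ (i,k1*d+k2) * kron C D $$ (k1*d+k2,j) = (A $$ (i div c, k1) * C $$ (k1, j div f)) * (B $$ (i mod c, k2) * D $$ (k2, j mod f))"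
      using A B C D i j lt k2 by (simp add: kron_index dv)
  qed
  also have "\<dots> = (\<Sum>k1<b. A $$ (i div c, k1) * C $$ (k1, j div f)) * (\<Sum>k2<d. B $$ (i mod c, k2) * D $$ (k2, j mod f))"
    by (simp add: sum_product)
  also have "\<dots> = kron (A * C) (B * D) $$ (i, j)"
    using A B C D i j i1 i2 j1 j2 by (simp add: kron_index scalar_prod_def lessThan_atLeast0)
  finally show "(kron A B * kron C D) $$ (i, j) = kron (A * C) (B * D) $$ (i, j)" .
qed (use A B C D in auto)

lemma kron_adj:
  assumes A: "A \<in> carrier_mat a b" and B: "B \<in> carrier_mat c d"
  shows "mat_adjoint (kron A B) = kron (mat_adjoint A) (mat_adjoint B)"
proof (rule eq_matI)
  fix i j assume "i < dim_row (kron (mat_adjoint A) (mat_adjoint B))" "j < dim_col (kron (mat_adjoint A) (mat_adjoint B))"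
  then have i: "i < b * d" and j: "j < a * c" using A B by auto
  have "i div d < b" "i mod d < d" "j div c < a" "j mod c < c" using i j div_lt mod_lt by auto
  then show "mat_adjoint (kron A B) $$ (i, j) = kron (mat_adjoint A) (mat_adjoint B) $$ (i, j)"
    using A B i j by (simp add: kron_index)
qed (use A B in auto)

lemma kron_one: "kron (1\<^sub>m a) (1\<^sub>m b) = 1\<^sub>m (a*b)"
proof (rule eq_matI)
  fix i j assume "i < dim_row (1\<^sub>m (a*b) :: complex mat)" "j < dim_col (1\<^sub>m (a*b) :: complex mat)"
  then have i: "i < a * b" and j: "j < a * b" by auto
  have lt: "i div b < a" "i mod b < b" "j div b < a" "j mod b < b" using i j div_lt mod_lt by auto
  have "(i = j) = (i div b = j div b \<and> i mod b = j mod b)"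
  proof
    assume "i div b = j div b \<and> i mod b = j mod b"
    then show "i = j" by (metis div_mult_mod_eq)
  qed simp
  then show "kron (1\<^sub>m a) (1\<^sub>m b) $$ (i, j) = 1\<^sub>m (a*b) $$ (i, j)"
    using i j lt by (simp add: kron_index)
qed auto

lemma kron_add_left:
  assumes A: "A \<in> carrier_mat a b" and A': "A' \<in> carrier_mat a b"
  shows "kron (A + A') B = kron A B + kron A' B"
proof (rule eq_matI)
  fix i j assume "i < dim_row (kron A B + kron A' B)" "j < dim_col (kron A B + kron A' B)"
  then have i: "i < a * dim_row B" and j: "j < b * dim_col B" using A A' by auto
  have "i div dim_row B < a" "j div dim_col B < b" using i j div_lt by auto
  then show "kron (A + A') B $$ (i, j) = (kron A B + kron A' B) $$ (i, j)"
    using A A' i j by (simp add: kron_index distrib_right)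
qed (use A A' in auto)

lemma inner_adj:
  fixes M :: "complex mat"
  assumes M: "M \<in> carrier_mat m n" and v: "v \<in> carrier_vec n" and w: "w \<in> carrier_vec m"
  shows "(M *\<^sub>v v) \<bullet>c w = v \<bullet>c (mat_adjoint M *\<^sub>v w)"
proof -
  have "(M *\<^sub>v v) \<bullet>c w = (\<Sum>i<m. (\<Sum>k<n. M $$ (i,k) * v $ k) * cnj (w $ i))"
    using M v w by (simp add: scalar_prod_def lessThan_atLeast0)
  also have "\<dots> = (\<Sum>i<m. \<Sum>k<n. v $ k * (M $$ (i,k) * cnj (w $ i)))"
    unfolding sum_distrib_right by (simp add: mult_ac)
  also have "\<dots> = (\<Sum>k<n. \<Sum>i<m. v $ k * (M $$ (i,k) * cnj (w $ i)))"
    by (rule sum.swap)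
  also have "\<dots> = (\<Sum>k<n. v $ k * cnj (\<Sum>i<m. cnj (M $$ (i,k)) * w $ i))"
    by (simp add: sum_distrib_left)
  also have "\<dots> = v \<bullet>c (mat_adjoint M *\<^sub>v w)"
    using M v w by (simp add: scalar_prod_def lessThan_atLeast0)
  finally show ?thesis .
qed

lemma psd_congr:
  fixes M C :: "complex mat"
  assumes M: "psd n M" and C: "C \<in> carrier_mat m n"
  shows "psd m (C * M * mat_adjoint C)"
proof -
  have Mc: "M \<in> carrier_mat n n" and Mh: "mat_adjoint M = M"
    and Mp: "\<And>v. v \<in> carrier_vec n \<Longrightarrow> 0 \<le> Re ((M *\<^sub>v v) \<bullet>c v)"
    using M unfolding psd_def by auto
  have car: "C * M * mat_adjoint C \<in> carrier_mat m m" using Mc C by auto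
  have "mat_adjoint (C * M * mat_adjoint C) = mat_adjoint (mat_adjoint C) * mat_adjoint (C * M)"
    using Mc C by (intro adj_mult[of _ m n]) auto
  also have "\<dots> = C * (M * mat_adjoint C)"
    using Mc C Mh by (simp add: adj_mult[of C m n M n])
  also have "\<dots> = C * M * mat_adjoint C"
    using Mc C by (simp add: assoc_mult_mat[of C m n M n _ m])
  finally have herm: "mat_adjoint (C * M * mat_adjoint C) = C * M * mat_adjoint C" .
  have pos: "0 \<le> Re (((C * M * mat_adjoint C) *\<^sub>v v) \<bullet>c v)" if v: "v \<in> carrier_vec m" for v
  proof -
    let ?u = "mat_adjoint C *\<^sub>v v"
    have u: "?u \<in> carrier_vec n" using mult_mat_vec_carrier[OF adj_carrier[OF C] v] .
    have "(C * M * mat_adjoint C) *\<^sub>v v = C *\<^sub>v (M *\<^sub>v ?u)"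
    proof -
      have "(C * M * mat_adjoint C) *\<^sub>v v = (C * M) *\<^sub>v ?u"
        using Mc C v by (intro assoc_mult_mat_vec[of _ m n _ m]) auto
      also have "\<dots> = C *\<^sub>v (M *\<^sub>v ?u)"
        using Mc C u by (intro assoc_mult_mat_vec[of _ m n _ n]) auto
      finally show ?thesis .
    qed
    then have "((C * M * mat_adjoint C) *\<^sub>v v) \<bullet>c v = (M *\<^sub>v ?u) \<bullet>c ?u"
      using inner_adj[OF C _ v, of "M *\<^sub>v ?u"] Mc u by simp
    then show ?thesis using Mp[OF u] by simp
  qed
  show ?thesis unfolding psd_def using car herm pos by auto
qed

lemma psd_add:
  fixes A B :: "complex mat"
  assumes A: "psd n A" and B: "psd n B"
  shows "psd n (A + B)"
proof -
  have Ac: "A \<in> carrier_mat n n" and Bc: "B \<in> carrier_mat n n" using A B unfolding psd_def by auto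
  have "((A + B) *\<^sub>v v) \<bullet>c v = (A *\<^sub>v v) \<bullet>c v + (B *\<^sub>v v) \<bullet>c v" if v: "v \<in> carrier_vec n" for v
    using Ac Bc v by (simp add: add_mult_distrib_mat_vec[of _ n n] add_scalar_prod_distrib[of _ n])
  then show ?thesis using A B Ac Bc unfolding psd_def by (auto simp: adj_plus)
qed

lemma psd_diag:
  fixes A :: "complex mat"
  assumes A: "psd n A" and i: "i < n"
  shows "0 \<le> Re (A $$ (i,i))"
proof -
  have Ac: "A \<in> carrier_mat n n" using A unfolding psd_def by auto
  have cu: "conjugate (unit_vec n i) = (unit_vec n i :: complex vec)"
    by (rule eq_vecI) (auto simp: unit_vec_def)
  have "(A *\<^sub>v unit_vec n i) \<bullet>c unit_vec n i = A $$ (i,i)"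
    unfolding cu using Ac i by (simp add: scalar_prod_right_unit[OF i])
  then show ?thesis using A i unfolding psd_def by (metis unit_vec_carrier)
qed

lemma psd_trace: "psd n A \<Longrightarrow> 0 \<le> Re (mtrace A)"
  unfolding mtrace_def
  by (auto simp: psd_def Re_sum intro!: sum_nonneg psd_diag)

lemma mtrace_cyclic:
  fixes A B :: "complex mat"
  assumes A: "A \<in> carrier_mat m n" and B: "B \<in> carrier_mat n m"
  shows "mtrace (A * B) = mtrace (B * A)"
proof -
  have "mtrace (A * B) = (\<Sum>i<m. \<Sum>k<n. A $$ (i,k) * B $$ (k,i))"
    using A B by (simp add: mtrace_def scalar_prod_def lessThan_atLeast0)
  also have "\<dots> = (\<Sum>k<n. \<Sum>i<m. B $$ (k,i) * A $$ (i,k))"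
    by (subst sum.swap) (simp add: mult.commute)
  also have "\<dots> = mtrace (B * A)"
    using A B by (simp add: mtrace_def scalar_prod_def lessThan_atLeast0)
  finally show ?thesis .
qed

lemma mtrace_minus:
  fixes A B :: "complex mat"
  assumes A: "A \<in> carrier_mat n n" and B: "B \<in> carrier_mat n n"
  shows "mtrace (A - B) = mtrace A - mtrace B"
  using A B by (simp add: mtrace_def sum_subtractf)

lemma kron_one_mult_vec:
  fixes Y :: "complex mat"
  assumes Y: "Y \<in> carrier_mat n n" and v: "v \<in> carrier_vec (m*n)" and a: "a < m" and b: "b < n"
  shows "(kron (1\<^sub>m m) Y *\<^sub>v v) $ (a*n+b) = (Y *\<^sub>v vec n (\<lambda>b'. v $ (a*n+b'))) $ b"
proof -
  have lt: "a*n+b < m*n"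
  proof -
    have "a*n+b < Suc a * n" using b by simp
    also have "Suc a * n \<le> m * n" using a by (intro mult_le_mono1) simp
    finally show ?thesis .
  qed
  have "(kron (1\<^sub>m m) Y *\<^sub>v v) $ (a*n+b) = (\<Sum>k<m*n. kron (1\<^sub>m m) Y $$ (a*n+b, k) * v $ k)"
    using Y v lt by (simp add: scalar_prod_def lessThan_atLeast0)
  also have "\<dots> = (\<Sum>a'<m. \<Sum>b'<n. kron (1\<^sub>m m) Y $$ (a*n+b, a'*n+b') * v $ (a'*n+b'))"
    by (rule sum_split_prod)
  also have "\<dots> = (\<Sum>a'<m. if a' = a then (\<Sum>b'<n. Y $$ (b, b') * v $ (a*n+b')) else 0)"
  proof (intro sum.cong refl)
    fix a' assume a': "a' \<in> {..<m}"
    have tm: "kron (1\<^sub>m m) Y $$ (a*n+b, a'*n+b') * v $ (a'*n+b') = (if a' = a then Y $$ (b, b') * v $ (a*n+b') else 0)"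
      if b': "b' < n" for b'
    proof -
      have lt2: "a'*n+b' < m*n"
      proof -
        have "a'*n+b' < Suc a' * n" using b' by simp
        also have "Suc a' * n \<le> m * n" using a' by (intro mult_le_mono1) simp
        finally show ?thesis .
      qed
      have "kron (1\<^sub>m m) Y $$ (a*n+b, a'*n+b') = 1\<^sub>m m $$ (a, a') * Y $$ (b, b')"
        using Y lt lt2 b b' by (simp add: kron_index)
      then show ?thesis using a a' by auto
    qed
    show "(\<Sum>b'<n. kron (1\<^sub>m m) Y $$ (a*n+b, a'*n+b') * v $ (a'*n+b')) =
      (if a' = a then (\<Sum>b'<n. Y $$ (b, b') * v $ (a*n+b')) else 0)"
    proof -
      have "(\<Sum>b'<n. kron (1\<^sub>m m) Y $$ (a*n+b, a'*n+b') * v $ (a'*n+b')) =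
        (\<Sum>b'<n. if a' = a then Y $$ (b, b') * v $ (a*n+b') else 0)"
        by (rule sum.cong) (simp_all add: tm)
      also have "\<dots> = (if a' = a then (\<Sum>b'<n. Y $$ (b, b') * v $ (a*n+b')) else 0)"
        by (cases "a' = a") simp_all
      finally show ?thesis .
    qed
  qed
  also have "\<dots> = (\<Sum>b'<n. Y $$ (b, b') * v $ (a*n+b'))"
    using a by simp
  also have "\<dots> = (Y *\<^sub>v vec n (\<lambda>b'. v $ (a*n+b'))) $ b"
    using Y b by (simp add: scalar_prod_def lessThan_atLeast0)
  finally show ?thesis .
qed

lemma psd_kron_one:
  fixes Y :: "complex mat"
  assumes Y: "psd n Y"
  shows "psd (m*n) (kron (1\<^sub>m m) Y)"
proof -
  have Yc: "Y \<in> carrier_mat n n" and Yh: "mat_adjoint Y = Y"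
    and Yp: "\<And>v. v \<in> carrier_vec n \<Longrightarrow> 0 \<le> Re ((Y *\<^sub>v v) \<bullet>c v)"
    using Y unfolding psd_def by auto
  have car: "kron (1\<^sub>m m) Y \<in> carrier_mat (m*n) (m*n)" using Yc by auto
  have herm: "mat_adjoint (kron (1\<^sub>m m) Y) = kron (1\<^sub>m m) Y"
    using Yc Yh by (simp add: kron_adj[of _ m m _ n n])
  have pos: "0 \<le> Re ((kron (1\<^sub>m m) Y *\<^sub>v v) \<bullet>c v)" if v: "v \<in> carrier_vec (m*n)" for v
  proof -
    define blk where "blk a = vec n (\<lambda>b'. v $ (a*n+b'))" for a
    have "(kron (1\<^sub>m m) Y *\<^sub>v v) \<bullet>c v = (\<Sum>i<m*n. (kron (1\<^sub>m m) Y *\<^sub>v v) $ i * cnj (v $ i))"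
      using v by (simp add: scalar_prod_def lessThan_atLeast0)
    also have "\<dots> = (\<Sum>a<m. \<Sum>b<n. (kron (1\<^sub>m m) Y *\<^sub>v v) $ (a*n+b) * cnj (v $ (a*n+b)))"
      by (rule sum_split_prod)
    also have "\<dots> = (\<Sum>a<m. (Y *\<^sub>v blk a) \<bullet>c blk a)"
    proof (intro sum.cong refl)
      fix a assume a: "a \<in> {..<m}"
      have "(Y *\<^sub>v blk a) \<bullet>c blk a = (\<Sum>b<n. (Y *\<^sub>v blk a) $ b * cnj (blk a $ b))"
        by (simp add: scalar_prod_def lessThan_atLeast0 blk_def)
      also have "\<dots> = (\<Sum>b<n. (kron (1\<^sub>m m) Y *\<^sub>v v) $ (a*n+b) * cnj (v $ (a*n+b)))"
        using kron_one_mult_vec[OF Yc v] a by (simp add: blk_def)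
      finally show "(\<Sum>b<n. (kron (1\<^sub>m m) Y *\<^sub>v v) $ (a*n+b) * cnj (v $ (a*n+b))) = (Y *\<^sub>v blk a) \<bullet>c blk a" by simp
    qed
    finally have eq: "(kron (1\<^sub>m m) Y *\<^sub>v v) \<bullet>c v = (\<Sum>a<m. (Y *\<^sub>v blk a) \<bullet>c blk a)" .
    have "0 \<le> (\<Sum>a<m. Re ((Y *\<^sub>v blk a) \<bullet>c blk a))"
      by (intro sum_nonneg Yp) (simp add: blk_def)
    then show ?thesis unfolding eq by (simp add: Re_sum)
  qed
  show ?thesis unfolding psd_def using car herm pos by auto
qed

lemma conj_carrier: "W \<in> carrier_mat m n \<Longrightarrow> X \<in> carrier_mat n n \<Longrightarrow> W * X * mat_adjoint W \<in> carrier_mat m m"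
  by (meson adj_carrier mult_carrier_mat)

lemma conj_carrier': "W \<in> carrier_mat m n \<Longrightarrow> X \<in> carrier_mat m m \<Longrightarrow> mat_adjoint W * X * W \<in> carrier_mat n n"
  by (meson adj_carrier mult_carrier_mat)

declare minus_carrier_mat[simp]

lemma proj_props:
  fixes V :: "complex mat"
  assumes V: "V \<in> carrier_mat m n" and VV: "mat_adjoint V * V = 1\<^sub>m n"
  shows "1\<^sub>m m - V * mat_adjoint V \<in> carrier_mat m m"
    "mat_adjoint (1\<^sub>m m - V * mat_adjoint V) = 1\<^sub>m m - V * mat_adjoint V"
    "(1\<^sub>m m - V * mat_adjoint V) * (1\<^sub>m m - V * mat_adjoint V) = 1\<^sub>m m - V * mat_adjoint V"
proof -
  let ?Q = "V * mat_adjoint V"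
  have Qc: "?Q \<in> carrier_mat m m" using V by auto
  show "1\<^sub>m m - ?Q \<in> carrier_mat m m" using Qc by auto
  have "mat_adjoint ?Q = ?Q" using adj_mult[of V m n "mat_adjoint V" m] V by simp
  then show "mat_adjoint (1\<^sub>m m - ?Q) = 1\<^sub>m m - ?Q"
    using Qc by (simp add: adj_minus[of _ m m])
  have QQ: "?Q * ?Q = ?Q"
  proof -
    have "?Q * ?Q = V * (mat_adjoint V * (V * mat_adjoint V))"
      using V by (intro assoc_mult_mat[of _ m n _ m _ m]) auto
    also have "mat_adjoint V * (V * mat_adjoint V) = (mat_adjoint V * V) * mat_adjoint V"
      using V by (intro assoc_mult_mat[of _ n m _ n _ m, symmetric]) auto
    also have "\<dots> = mat_adjoint V" using V VV by simp
    finally show ?thesis .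
  qed
  have "(1\<^sub>m m - ?Q) * (1\<^sub>m m - ?Q) = 1\<^sub>m m * (1\<^sub>m m - ?Q) - ?Q * (1\<^sub>m m - ?Q)"
    using Qc by (intro minus_mult_distrib_mat[of _ m m _ _ m]) auto
  also have "?Q * (1\<^sub>m m - ?Q) = ?Q * 1\<^sub>m m - ?Q * ?Q"
    using Qc by (intro mult_minus_distrib_mat[of _ m m _ m]) auto
  also have "1\<^sub>m m * (1\<^sub>m m - ?Q) - (?Q * 1\<^sub>m m - ?Q * ?Q) = 1\<^sub>m m - ?Q"
    unfolding QQ using Qc by (intro eq_matI) auto
  finally show "(1\<^sub>m m - ?Q) * (1\<^sub>m m - ?Q) = 1\<^sub>m m - ?Q" .
qed

lemma fwd:
  fixes V W X Om :: "complex mat"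
  assumes V: "V \<in> carrier_mat dR' dR" and VV: "mat_adjoint V * V = 1\<^sub>m dR"
    and W: "W \<in> carrier_mat dA' dA" and WW: "mat_adjoint W * W = 1\<^sub>m dA"
    and Om: "Om \<in> carrier_mat (dR*dA) (dR*dA)"
    and X: "psd dA X" and F: "psd (dR*dA) (kron (1\<^sub>m dR) X - Om)"
  shows "psd dA' (W * X * mat_adjoint W)"
    "psd (dR'*dA') (kron (1\<^sub>m dR') (W * X * mat_adjoint W) - kron V W * Om * mat_adjoint (kron V W))"
    "mtrace (W * X * mat_adjoint W) = mtrace X"
proof -
  have Xc: "X \<in> carrier_mat dA dA" using X unfolding psd_def by auto
  define K where "K = kron V W"
  define X' where "X' = W * X * mat_adjoint W"
  define P where "P = 1\<^sub>m dR' - V * mat_adjoint V"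
  define Q where "Q = V * mat_adjoint V"
  have Kc: "K \<in> carrier_mat (dR'*dA') (dR*dA)" using V W by (simp add: K_def)
  have aK: "mat_adjoint K = kron (mat_adjoint V) (mat_adjoint W)"
    unfolding K_def using V W by (rule kron_adj)
  have X'c: "X' \<in> carrier_mat dA' dA'" using conj_carrier[OF W Xc] by (simp add: X'_def)
  have Qc: "Q \<in> carrier_mat dR' dR'" using V by (simp add: Q_def)
  have Pc: "P \<in> carrier_mat dR' dR'" and Ph: "mat_adjoint P = P" and PP: "P * P = P"
    using proj_props[OF V VV] unfolding P_def by auto
  show X'p: "psd dA' (W * X * mat_adjoint W)" using psd_congr[OF X W] .
  have Ac: "kron (1\<^sub>m dR) X \<in> carrier_mat (dR*dA) (dR*dA)" using Xc by auto
  have e1: "K * kron (1\<^sub>m dR) X * mat_adjoint K = kron Q X'"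
  proof -
    have "K * kron (1\<^sub>m dR) X = kron (V * 1\<^sub>m dR) (W * X)"
      unfolding K_def using V W Xc by (intro kron_mult) auto
    also have "\<dots> = kron V (W * X)" using V by simp
    finally have "K * kron (1\<^sub>m dR) X * mat_adjoint K = kron V (W * X) * kron (mat_adjoint V) (mat_adjoint W)"
      using aK by simp
    also have "\<dots> = kron (V * mat_adjoint V) (W * X * mat_adjoint W)"
      using V W Xc by (intro kron_mult) auto
    finally show ?thesis unfolding Q_def X'_def .
  qed
  have e2: "K * (kron (1\<^sub>m dR) X - Om) * mat_adjoint K = K * kron (1\<^sub>m dR) X * mat_adjoint K - K * Om * mat_adjoint K"
  proof -
    have "K * (kron (1\<^sub>m dR) X - Om) = K * kron (1\<^sub>m dR) X - K * Om"
      using Kc Ac Om by (intro mult_minus_distrib_mat) auto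
    moreover have "(K * kron (1\<^sub>m dR) X - K * Om) * mat_adjoint K = K * kron (1\<^sub>m dR) X * mat_adjoint K - K * Om * mat_adjoint K"
      using Kc Ac Om by (intro minus_mult_distrib_mat[of _ "dR'*dA'" "dR*dA" _ _ "dR'*dA'"]) auto
    ultimately show ?thesis by simp
  qed
  have e3: "kron (1\<^sub>m dR') X' = kron Q X' + kron P X'"
  proof -
    have "P = 1\<^sub>m dR' - Q" by (simp add: P_def Q_def)
    then have "1\<^sub>m dR' = Q + P" using Qc by (intro eq_matI) auto
    then have "kron (1\<^sub>m dR') X' = kron (Q + P) X'" by simp
    also have "\<dots> = kron Q X' + kron P X'" using Qc Pc by (rule kron_add_left)
    finally show ?thesis .
  qed
  have decomp: "kron (1\<^sub>m dR') X' - K * Om * mat_adjoint K = kron P X' + K * (kron (1\<^sub>m dR) X - Om) * mat_adjoint K"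
    unfolding e2 e1 e3 using Qc Pc X'c Kc Om by (intro eq_matI) auto
  have kP: "kron P X' = kron P (1\<^sub>m dA') * kron (1\<^sub>m dR') X' * mat_adjoint (kron P (1\<^sub>m dA'))"
  proof -
    have "mat_adjoint (kron P (1\<^sub>m dA')) = kron P (1\<^sub>m dA')"
      using Pc Ph by (simp add: kron_adj[of _ dR' dR' _ dA' dA'])
    moreover have "kron P (1\<^sub>m dA') * kron (1\<^sub>m dR') X' = kron (P * 1\<^sub>m dR') (1\<^sub>m dA' * X')"
      using Pc X'c by (intro kron_mult) auto
    moreover have "kron (P * 1\<^sub>m dR') (1\<^sub>m dA' * X') = kron P X'" using Pc X'c by simp
    moreover have "kron P X' * kron P (1\<^sub>m dA') = kron (P * P) (X' * 1\<^sub>m dA')"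
      using Pc X'c by (intro kron_mult) auto
    ultimately show ?thesis using PP X'c by simp
  qed
  have p1: "psd (dR'*dA') (kron P X')"
  proof -
    have k1: "psd (dR'*dA') (kron (1\<^sub>m dR') X')"
      using psd_kron_one[of dA' X' dR'] X'p unfolding X'_def by simp
    have "kron P (1\<^sub>m dA') \<in> carrier_mat (dR'*dA') (dR'*dA')" using Pc by simp
    from psd_congr[OF k1 this] show ?thesis unfolding kP .
  qed
  have p2: "psd (dR'*dA') (K * (kron (1\<^sub>m dR) X - Om) * mat_adjoint K)"
    using psd_congr[OF F Kc] .
  show "psd (dR'*dA') (kron (1\<^sub>m dR') (W * X * mat_adjoint W) - kron V W * Om * mat_adjoint (kron V W))"
    using psd_add[OF p1 p2] decomp unfolding X'_def K_def by simp
  have "mtrace (W * X * mat_adjoint W) = mtrace (mat_adjoint W * (W * X))"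
    using W Xc by (intro mtrace_cyclic[of _ dA' dA]) auto
  also have "mat_adjoint W * (W * X) = (mat_adjoint W * W) * X"
    using W Xc by (intro assoc_mult_mat[of _ dA dA' _ dA _ dA, symmetric]) auto
  finally show "mtrace (W * X * mat_adjoint W) = mtrace X" using WW Xc by simp
qed

lemma cancel_left:
  fixes K M :: "complex mat"
  assumes K: "K \<in> carrier_mat m n" and KK: "mat_adjoint K * K = 1\<^sub>m n" and M: "M \<in> carrier_mat n p"
  shows "mat_adjoint K * (K * M) = M"
proof -
  have "mat_adjoint K * (K * M) = (mat_adjoint K * K) * M"
    using K M by (intro assoc_mult_mat[of _ n m _ n _ p, symmetric]) auto
  then show ?thesis using KK M by simp
qed

lemma bwd:
  fixes V W X' Om :: "complex mat"
  assumes V: "V \<in> carrier_mat dR' dR" and VV: "mat_adjoint V * V = 1\<^sub>m dR"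
    and W: "W \<in> carrier_mat dA' dA" and WW: "mat_adjoint W * W = 1\<^sub>m dA"
    and Om: "Om \<in> carrier_mat (dR*dA) (dR*dA)"
    and X': "psd dA' X'" and F: "psd (dR'*dA') (kron (1\<^sub>m dR') X' - kron V W * Om * mat_adjoint (kron V W))"
  shows "psd dA (mat_adjoint W * X' * W)"
    "psd (dR*dA) (kron (1\<^sub>m dR) (mat_adjoint W * X' * W) - Om)"
    "Re (mtrace (mat_adjoint W * X' * W)) \<le> Re (mtrace X')"
proof -
  have X'c: "X' \<in> carrier_mat dA' dA'" using X' unfolding psd_def by auto
  define K where "K = kron V W"
  define X where "X = mat_adjoint W * X' * W"
  have Kc: "K \<in> carrier_mat (dR'*dA') (dR*dA)" using V W by (simp add: K_def)
  have aK: "mat_adjoint K = kron (mat_adjoint V) (mat_adjoint W)"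
    unfolding K_def using V W by (rule kron_adj)
  have KK: "mat_adjoint K * K = 1\<^sub>m (dR*dA)"
  proof -
    have "mat_adjoint K * K = kron (mat_adjoint V * V) (mat_adjoint W * W)"
      unfolding aK unfolding K_def using V W by (intro kron_mult) auto
    then show ?thesis using VV WW kron_one by simp
  qed
  have Xc: "X \<in> carrier_mat dA dA" unfolding X_def using conj_carrier'[OF W X'c] .
  show "psd dA (mat_adjoint W * X' * W)"
    using psd_congr[OF X' adj_carrier[OF W]] by simp
  have Ac: "kron (1\<^sub>m dR') X' \<in> carrier_mat (dR'*dA') (dR'*dA')" using X'c by auto
  have KOK: "K * Om * mat_adjoint K \<in> carrier_mat (dR'*dA') (dR'*dA')"
    using conj_carrier[OF Kc Om] .
  have e1: "mat_adjoint K * kron (1\<^sub>m dR') X' * K = kron (1\<^sub>m dR) X"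
  proof -
    have "mat_adjoint K * kron (1\<^sub>m dR') X' = kron (mat_adjoint V * 1\<^sub>m dR') (mat_adjoint W * X')"
      unfolding aK using V W X'c by (intro kron_mult) auto
    also have "\<dots> = kron (mat_adjoint V) (mat_adjoint W * X')" using V by simp
    finally have "mat_adjoint K * kron (1\<^sub>m dR') X' * K = kron (mat_adjoint V) (mat_adjoint W * X') * kron V W"
      by (simp add: K_def)
    also have "\<dots> = kron (mat_adjoint V * V) (mat_adjoint W * X' * W)"
      using V W X'c by (intro kron_mult) auto
    finally show ?thesis unfolding X_def VV .
  qed
  have e2: "mat_adjoint K * (K * Om * mat_adjoint K) * K = Om"
  proof -
    have "K * Om * mat_adjoint K = K * (Om * mat_adjoint K)"
      using Kc Om by (intro assoc_mult_mat[of _ "dR'*dA'" "dR*dA" _ "dR*dA" _ "dR'*dA'"]) auto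
    then have "mat_adjoint K * (K * Om * mat_adjoint K) = Om * mat_adjoint K"
      using cancel_left[OF Kc KK, of "Om * mat_adjoint K" "dR'*dA'"] Kc Om by simp
    moreover have "Om * mat_adjoint K * K = Om * (mat_adjoint K * K)"
      using Kc Om by (intro assoc_mult_mat[of _ "dR*dA" "dR*dA" _ "dR'*dA'" _ "dR*dA"]) auto
    ultimately show ?thesis using KK Om by simp
  qed
  have e3: "mat_adjoint K * (kron (1\<^sub>m dR') X' - K * Om * mat_adjoint K) * K
      = mat_adjoint K * kron (1\<^sub>m dR') X' * K - mat_adjoint K * (K * Om * mat_adjoint K) * K"
  proof -
    have "mat_adjoint K * (kron (1\<^sub>m dR') X' - K * Om * mat_adjoint K)
        = mat_adjoint K * kron (1\<^sub>m dR') X' - mat_adjoint K * (K * Om * mat_adjoint K)"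
      using Kc Ac KOK by (intro mult_minus_distrib_mat[of _ "dR*dA" "dR'*dA'" _ "dR'*dA'"]) auto
    moreover have "(mat_adjoint K * kron (1\<^sub>m dR') X' - mat_adjoint K * (K * Om * mat_adjoint K)) * K
        = mat_adjoint K * kron (1\<^sub>m dR') X' * K - mat_adjoint K * (K * Om * mat_adjoint K) * K"
      using Kc mult_carrier_mat[OF adj_carrier[OF Kc] Ac] mult_carrier_mat[OF adj_carrier[OF Kc] KOK]
      by (intro minus_mult_distrib_mat[of _ "dR*dA" "dR'*dA'" _ _ "dR*dA"]) auto
    ultimately show ?thesis by simp
  qed
  have "psd (dR*dA) (mat_adjoint K * (kron (1\<^sub>m dR') X' - K * Om * mat_adjoint K) * mat_adjoint (mat_adjoint K))"
    using psd_congr[OF F[folded K_def] adj_carrier[OF Kc]] .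
  then show "psd (dR*dA) (kron (1\<^sub>m dR) (mat_adjoint W * X' * W) - Om)"
    using e1 e2 e3 unfolding X_def by simp
  define Q where "Q = W * mat_adjoint W"
  define P where "P = 1\<^sub>m dA' - W * mat_adjoint W"
  have Qc: "Q \<in> carrier_mat dA' dA'" using W by (simp add: Q_def)
  have Pc: "P \<in> carrier_mat dA' dA'" and Ph: "mat_adjoint P = P" and PP: "P * P = P"
    using proj_props[OF W WW] unfolding P_def by auto
  have t1: "mtrace (mat_adjoint W * X' * W) = mtrace (X' * Q)"
  proof -
    have "mat_adjoint W * X' * W = mat_adjoint W * (X' * W)"
      using W X'c by (intro assoc_mult_mat[of _ dA dA' _ dA' _ dA]) auto
    then have "mtrace (mat_adjoint W * X' * W) = mtrace ((X' * W) * mat_adjoint W)"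
      using W X'c mtrace_cyclic[of "mat_adjoint W" dA dA' "X' * W"] by simp
    also have "(X' * W) * mat_adjoint W = X' * Q"
      unfolding Q_def using W X'c by (intro assoc_mult_mat[of _ dA' dA' _ dA _ dA']) auto
    finally show ?thesis .
  qed
  have XP: "X' - X' * Q = X' * P"
  proof -
    have "X' * P = X' * 1\<^sub>m dA' - X' * Q"
      unfolding P_def Q_def using W X'c by (intro mult_minus_distrib_mat[of _ dA' dA' _ dA']) auto
    then show ?thesis using X'c by simp
  qed
  have "mtrace (X' * P) = mtrace (X' * P * P)"
    using X'c Pc PP by (simp add: assoc_mult_mat[of X' dA' dA' P dA' P dA'])
  also have "\<dots> = mtrace (P * (X' * P))"
    using X'c Pc by (intro mtrace_cyclic[of _ dA' dA']) auto
  also have "P * (X' * P) = P * X' * mat_adjoint P"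
    using X'c Pc Ph by (simp add: assoc_mult_mat[of P dA' dA' X' dA' P dA'])
  finally have "mtrace (X' * P) = mtrace (P * X' * mat_adjoint P)" .
  moreover have "0 \<le> Re (mtrace (P * X' * mat_adjoint P))"
    using psd_trace[OF psd_congr[OF X' Pc]] .
  moreover have "mtrace X' - mtrace (X' * Q) = mtrace (X' * P)"
    using XP mtrace_minus[of X' dA' "X' * Q"] X'c Qc by simp
  ultimately show "Re (mtrace (mat_adjoint W * X' * W)) \<le> Re (mtrace X')"
    using t1 by (metis minus_complex.sel(1) diff_ge_0_iff_ge)
qed

lemma Hmin_iso:
  fixes V W Om :: "complex mat"
  assumes V: "V \<in> carrier_mat dR' dR" and VV: "mat_adjoint V * V = 1\<^sub>m dR"
    and W: "W \<in> carrier_mat dA' dA" and WW: "mat_adjoint W * W = 1\<^sub>m dA"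
    and Om: "Om \<in> carrier_mat (dR*dA) (dR*dA)"
  shows "Hmin dR' dA' (conj_by (kron V W) Om) = Hmin dR dA Om"
proof -
  define S where "S = {Re (mtrace X) | X. psd dA X \<and> psd (dR * dA) (kron (1\<^sub>m dR) X - Om)}"
  define S' where "S' = {Re (mtrace X) | X. psd dA' X \<and> psd (dR' * dA') (kron (1\<^sub>m dR') X - conj_by (kron V W) Om)}"
  have sub: "S \<subseteq> S'"
  proof
    fix x assume "x \<in> S"
    then obtain X where x: "x = Re (mtrace X)" and X: "psd dA X" and F: "psd (dR * dA) (kron (1\<^sub>m dR) X - Om)"
      unfolding S_def by auto
    note f = fwd[OF V VV W WW Om X F]
    show "x \<in> S'" unfolding S'_def conj_by_def
      using f x by (intro CollectI exI[of _ "W * X * mat_adjoint W"]) auto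
  qed
  have low: "\<exists>x\<in>S. x \<le> x'" if "x' \<in> S'" for x'
  proof -
    obtain X' where x: "x' = Re (mtrace X')" and X': "psd dA' X'"
        and F: "psd (dR' * dA') (kron (1\<^sub>m dR') X' - kron V W * Om * mat_adjoint (kron V W))"
      using \<open>x' \<in> S'\<close> unfolding S'_def conj_by_def by auto
    note b = bwd[OF V VV W WW Om X' F]
    have "Re (mtrace (mat_adjoint W * X' * W)) \<in> S" unfolding S_def using b by auto
    then show ?thesis using b x by auto
  qed
  have bS: "bdd_below S" unfolding S_def bdd_below_def using psd_trace by blast
  have bS': "bdd_below S'" unfolding S'_def bdd_below_def using psd_trace by blast
  have "Inf S = Inf S'"
  proof (cases "S = {}")
    case True
    then have "S' = {}" using low by blast
    then show ?thesis using True by simp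
  next
    case False
    then have ne': "S' \<noteq> {}" using sub by blast
    have "Inf S' \<le> Inf S" using cInf_superset_mono[OF False bS' sub] .
    moreover have "Inf S \<le> Inf S'"
    proof (rule cInf_greatest[OF ne'])
      fix x' assume "x' \<in> S'"
      then obtain x where "x \<in> S" "x \<le> x'" using low by blast
      then show "Inf S \<le> x'" using cInf_lower[OF _ bS, of x] by linarith
    qed
    ultimately show ?thesis by simp
  qed
  then show ?thesis unfolding Hmin_def S_def S'_def by simp
qed

theorem lemma1:
  fixes mu :: "'g :: {topological_group_add, t2_space} measure"
    and UR UA UR' UA' :: "'g \<Rightarrow> complex mat"
    and dR dA dR' dA' :: nat
    and V W :: "complex mat"
  assumes "haar_prob mu"
    and "unitary_rep dR UR" and "unitary_rep dA UA"
    and "unitary_rep dR' UR'" and "unitary_rep dA' UA'"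
    and "isometry dR' dR V" and "isometry dA' dA W"
    and "\<forall>M \<in> carrier_mat (dR * dA) (dR * dA).
           conj_by (kron V W) (twirl mu (\<lambda>g. kron (UR g) (UA g)) (dR * dA) M)
           = twirl mu (\<lambda>g. kron (UR' g) (UA' g)) (dR' * dA') (conj_by (kron V W) M)"
  shows "\<forall>\<eta> \<rho>. is_state dR \<eta> \<and> is_state dA \<rho> \<longrightarrow>
           Hq mu UR' UA' dR' dA' (conj_by V \<eta>) (conj_by W \<rho>) = Hq mu UR UA dR dA \<eta> \<rho>"
proof (intro allI impI)
  fix \<eta> \<rho> assume st: "is_state dR \<eta> \<and> is_state dA \<rho>"
  have ec: "\<eta> \<in> carrier_mat dR dR" and rc: "\<rho> \<in> carrier_mat dA dA"
    using st unfolding is_state_def psd_def by auto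
  have V: "V \<in> carrier_mat dR' dR" and VV: "mat_adjoint V * V = 1\<^sub>m dR"
    using assms(6) unfolding isometry_def by auto
  have W: "W \<in> carrier_mat dA' dA" and WW: "mat_adjoint W * W = 1\<^sub>m dA"
    using assms(7) unfolding isometry_def by auto
  define Om where "Om = twirl mu (\<lambda>g. kron (UR g) (UA g)) (dR * dA) (kron \<eta> \<rho>)"
  have Omc: "Om \<in> carrier_mat (dR*dA) (dR*dA)" unfolding Om_def twirl_def by simp
  have kc: "kron \<eta> \<rho> \<in> carrier_mat (dR*dA) (dR*dA)" using ec rc by simp
  have ek: "kron (conj_by V \<eta>) (conj_by W \<rho>) = conj_by (kron V W) (kron \<eta> \<rho>)"
  proof -
    have "kron V W * kron \<eta> \<rho> = kron (V * \<eta>) (W * \<rho>)"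
      using V W ec rc by (intro kron_mult) auto
    moreover have "kron (V * \<eta>) (W * \<rho>) * kron (mat_adjoint V) (mat_adjoint W)
        = kron (V * \<eta> * mat_adjoint V) (W * \<rho> * mat_adjoint W)"
      using V W ec rc by (intro kron_mult) auto
    ultimately show ?thesis unfolding conj_by_def using kron_adj[OF V W] by simp
  qed
  have "Hq mu UR' UA' dR' dA' (conj_by V \<eta>) (conj_by W \<rho>)
      = Hmin dR' dA' (twirl mu (\<lambda>g. kron (UR' g) (UA' g)) (dR' * dA') (conj_by (kron V W) (kron \<eta> \<rho>)))"
    unfolding Hq_def ek ..
  also have "\<dots> = Hmin dR' dA' (conj_by (kron V W) Om)"
    using assms(8) kc unfolding Om_def by simp
  also have "\<dots> = Hmin dR dA Om" using Hmin_iso[OF V VV W WW Omc] .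
  also have "\<dots> = Hq mu UR UA dR dA \<eta> \<rho>" unfolding Hq_def Om_def ..
  finally show "Hq mu UR' UA' dR' dA' (conj_by V \<eta>) (conj_by W \<rho>) = Hq mu UR UA dR dA \<eta> \<rho>" .
qed

end
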